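(* For probability densities $F_N,H_N$ on $\mathbb{R}^N$ with finite mean, \[ d_{T1,N}(\Phi[F_N],\Phi[H_N])\le\Big(1-\frac{1-\gamma}{4N}\Big)d_{T1,N}(F_N,H_N). \]
   Context: Fix $N\ge2$, rates $\lambda>0,\mu>0$, $\gamma=\lambda/(\lambda+\mu)$, and a probability density $g$ on $\mathbb{R}$ with $g\in L^2$, zero mean and finite second moment. Let $Q[F](v)=\binom{N}{2}^{-1}\sum_{i<j}\frac{1}{2\pi}\int_0^{2\pi}F(v_{ij}(\theta))d\theta$ and $R_j[F](v)=\int_{\mathbb{R}}\frac{1}{2\pi}\int_0^{2\pi}g(w\cos\theta-v_j\sin\theta)F(v_j(w,\theta))d\theta dw$, where $v_{ij}(\theta)$ replaces $(v_i,v_j)$ in $v$ by $(v_i\cos\theta+v_j\sin\theta,-v_i\sin\theta+v_j\cos\theta)$ and $v_j(w,\theta)$ replaces $v_j$ by $v_j\cos\theta+w\sin\theta$. $\Phi[F]=\gamma Q[F]+(1-\gamma)\frac1N\sum_{j=1}^NR_j[F]$. With $\hat f(\xi)=\int f(v)e^{-iv\cdot\xi}dv$, $d_{T1,N}(f,h)=\sup_{\xi\in\mathbb{R}^N\setminus\{0\}}|\hat f(\xi)-\hat h(\xi)|/|\xi|$. *)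

theory Defs
  imports "HOL-Analysis.Analysis"
begin

definition is_density :: "('a::euclidean_space \<Rightarrow> real) \<Rightarrow> bool" where
  "is_density f \<longleftrightarrow> f \<in> borel_measurable lborel \<and> (\<forall>v. 0 \<le> f v)
     \<and> integrable lborel f \<and> (LINT v|lborel. f v) = 1"

definition vij :: "(real, 'n::finite) vec \<Rightarrow> 'n \<Rightarrow> 'n \<Rightarrow> real \<Rightarrow> (real, 'n) vec" where
  "vij v i j \<theta> = (\<chi> k. if k = i then v$i * cos \<theta> + v$j * sin \<theta>
                    else if k = j then - v$i * sin \<theta> + v$j * cos \<theta> else v$k)"

definition vjw :: "(real, 'n::finite) vec \<Rightarrow> 'n \<Rightarrow> real \<Rightarrow> real \<Rightarrow> (real, 'n) vec" where
  "vjw v j w \<theta> = (\<chi> k. if k = j then v$j * cos \<theta> + w * sin \<theta> else v$k)"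

definition Qop :: "((real, 'n::{finite,linorder}) vec \<Rightarrow> real) \<Rightarrow> (real, 'n) vec \<Rightarrow> real" where
  "Qop F v = (1 / real (CARD('n::{finite,linorder}) choose 2)) *
     (\<Sum>(i,j)\<in>{(i,j). i < j}. (1 / (2*pi)) * (LBINT \<theta>=0..2*pi. F (vij v i j \<theta>)))"

definition Rop :: "(real \<Rightarrow> real) \<Rightarrow> ((real, 'n::finite) vec \<Rightarrow> real) \<Rightarrow> 'n \<Rightarrow> (real, 'n) vec \<Rightarrow> real" where
  "Rop g F j v = (LINT w|lborel. (1 / (2*pi)) *
     (LBINT \<theta>=0..2*pi. g (w * cos \<theta> - v$j * sin \<theta>) * F (vjw v j w \<theta>)))"

definition Phi :: "real \<Rightarrow> real \<Rightarrow> (real \<Rightarrow> real) \<Rightarrow> ((real, 'n::{finite,linorder}) vec \<Rightarrow> real)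
                   \<Rightarrow> (real, 'n) vec \<Rightarrow> real" where
  "Phi lam mu g F v = (let \<gamma> = lam / (lam + mu) in
     \<gamma> * Qop F v + (1 - \<gamma>) * (1 / real CARD('n::{finite,linorder})) * (\<Sum>j\<in>UNIV. Rop g F j v))"

definition fourier :: "((real, 'n::finite) vec \<Rightarrow> real) \<Rightarrow> (real, 'n) vec \<Rightarrow> complex" where
  "fourier f \<xi> = (LINT v|lborel. complex_of_real (f v) * cis (- (v \<bullet> \<xi>)))"

definition dT1 :: "((real, 'n::finite) vec \<Rightarrow> real) \<Rightarrow> ((real, 'n) vec \<Rightarrow> real) \<Rightarrow> ereal" where
  "dT1 f h = (SUP \<xi>\<in>UNIV - {0}. ereal (cmod (fourier f \<xi> - fourier h \<xi>) / norm \<xi>))"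

end

theory Submission
  imports Defs
begin

definition shear :: "'a::euclidean_space \<Rightarrow> 'a \<Rightarrow> real \<Rightarrow> 'a \<Rightarrow> 'a" where
  "shear b1 b2 t x = x + (t * (x \<bullet> b2)) *\<^sub>R b1"

lemma sum_upd_basis:
  fixes f :: "'a::euclidean_space \<Rightarrow> real"
  assumes "b1 \<in> Basis"
  shows "(\<Sum>b\<in>Basis. (f(b1:=y)) b *\<^sub>R b) = (\<Sum>b\<in>Basis. f b *\<^sub>R b) + (y - f b1) *\<^sub>R b1"
proof -
  have "(\<Sum>b\<in>Basis. (f(b1:=y)) b *\<^sub>R b) = y *\<^sub>R b1 + (\<Sum>b\<in>Basis-{b1}. (f(b1:=y)) b *\<^sub>R b)"
    using assms by (simp add: sum.remove)
  also have "(\<Sum>b\<in>Basis-{b1}. (f(b1:=y)) b *\<^sub>R b) = (\<Sum>b\<in>Basis-{b1}. f b *\<^sub>R b)"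
    by (rule sum.cong) auto
  also have "(\<Sum>b\<in>Basis. f b *\<^sub>R b) = f b1 *\<^sub>R b1 + (\<Sum>b\<in>Basis-{b1}. f b *\<^sub>R b)"
    using assms by (simp add: sum.remove)
  ultimately show ?thesis by (simp add: algebra_simps)
qed

lemma inner_sum_basis:
  fixes f :: "'a::euclidean_space \<Rightarrow> real"
  assumes "b2 \<in> Basis"
  shows "(\<Sum>b\<in>Basis. f b *\<^sub>R b) \<bullet> b2 = f b2"
  using assms by (simp add: inner_sum_left inner_Basis if_distrib cong: if_cong)

lemma nn_integral_shear:
  fixes h :: "'a::euclidean_space \<Rightarrow> ennreal"
  assumes b: "b1 \<in> Basis" "b2 \<in> Basis" "b1 \<noteq> b2" and h[measurable]: "h \<in> borel_measurable borel"
  shows "(\<integral>\<^sup>+x. h (shear b1 b2 t x) \<partial>lborel) = (\<integral>\<^sup>+x. h x \<partial>lborel)"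
proof -
  interpret P: product_sigma_finite "\<lambda>_::'a. lborel :: real measure" by standard
  define G where "G = (\<lambda>f::'a\<Rightarrow>real. h (\<Sum>b\<in>Basis. f b *\<^sub>R b))"
  have Gm[measurable]: "G \<in> borel_measurable (\<Pi>\<^sub>M b\<in>Basis. lborel)"
    unfolding G_def by measurable
  define I where "I = Basis - {b1}"
  have BI: "Basis = insert b1 I" "finite I" "b1 \<notin> I" using b by (auto simp: I_def)
  have sh: "shear b1 b2 t (\<Sum>b\<in>Basis. f b *\<^sub>R b) = (\<Sum>b\<in>Basis. (f(b1 := f b1 + t * f b2)) b *\<^sub>R b)" for f
    unfolding shear_def sum_upd_basis[OF b(1)] inner_sum_basis[OF b(2)] by simp
  have Gm2: "(\<lambda>f. G (f(b1 := f b1 + t * f b2))) \<in> borel_measurable (\<Pi>\<^sub>M b\<in>Basis. lborel)"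
  proof -
    have sh2: "(\<lambda>f. G (f(b1 := f b1 + t * f b2))) = (\<lambda>f. h (shear b1 b2 t (\<Sum>b\<in>Basis. f b *\<^sub>R b)))"
      unfolding G_def sh ..
    show ?thesis unfolding sh2 shear_def by measurable
  qed
  have "(\<integral>\<^sup>+x. h (shear b1 b2 t x) \<partial>lborel) = (\<integral>\<^sup>+f. G (f(b1 := f b1 + t * f b2)) \<partial>(\<Pi>\<^sub>M b\<in>Basis. lborel))"
  proof -
    have [measurable]: "(\<lambda>x. h (shear b1 b2 t x)) \<in> borel_measurable borel"
      unfolding shear_def by measurable
    show ?thesis
      by (subst lborel_eq, subst nn_integral_distr) (simp_all add: G_def sh del: fun_upd_apply)
  qed
  also have "\<dots> = (\<integral>\<^sup>+x. (\<integral>\<^sup>+y. G ((x(b1:=y))(b1 := y + t * x b2)) \<partial>lborel) \<partial>(\<Pi>\<^sub>M b\<in>I. lborel))"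
    using Gm2 unfolding BI(1) by (subst P.product_nn_integral_insert) (use BI b in auto)
  also have "\<dots> = (\<integral>\<^sup>+x. (\<integral>\<^sup>+y. G (x(b1:=y)) \<partial>lborel) \<partial>(\<Pi>\<^sub>M b\<in>I. lborel))"
  proof (rule nn_integral_cong)
    fix x :: "'a \<Rightarrow> real" assume x: "x \<in> space (\<Pi>\<^sub>M b\<in>I. lborel)"
    have m: "(\<lambda>y::real. G (x(b1:=y))) \<in> borel_measurable borel"
      unfolding G_def sum_upd_basis[OF b(1)] by measurable
    show "(\<integral>\<^sup>+y. G ((x(b1:=y))(b1 := y + t * x b2)) \<partial>lborel) = (\<integral>\<^sup>+y. G (x(b1:=y)) \<partial>lborel)"
      using nn_integral_real_affine[OF m, of 1 "t * x b2"] by (simp add: add.commute)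
  qed
  also have "\<dots> = (\<integral>\<^sup>+f. G f \<partial>(\<Pi>\<^sub>M b\<in>Basis. lborel))"
    using Gm unfolding BI(1) by (subst P.product_nn_integral_insert) (use BI b in auto)
  also have "\<dots> = (\<integral>\<^sup>+x. h x \<partial>lborel)"
    by (subst (2) lborel_eq) (simp add: nn_integral_distr G_def)
  finally show ?thesis .
qed

lemma shear_measurable[measurable]: "shear b1 b2 t \<in> borel_measurable borel"
  unfolding shear_def by measurable

lemma distr_shear:
  assumes b: "b1 \<in> Basis" "b2 \<in> Basis" "b1 \<noteq> b2"
  shows "distr lborel borel (shear b1 b2 t) = (lborel :: 'a::euclidean_space measure)"
proof (rule measure_eqI)
  fix A :: "'a set" assume A: "A \<in> sets (distr lborel borel (shear b1 b2 t))"
  then have [measurable]: "A \<in> sets borel" by simp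
  have "emeasure (distr lborel borel (shear b1 b2 t)) A = (\<integral>\<^sup>+x. indicator A (shear b1 b2 t x) \<partial>lborel)"
  proof -
    have m: "shear b1 b2 t -` A \<in> sets lborel"
      using measurable_sets[OF shear_measurable[of b1 b2 t], of A] by simp
    have "emeasure (distr lborel borel (shear b1 b2 t)) A = emeasure lborel (shear b1 b2 t -` A)"
      by (simp add: emeasure_distr)
    also have "\<dots> = (\<integral>\<^sup>+x. indicator (shear b1 b2 t -` A) x \<partial>lborel)"
      using m by simp
    finally show ?thesis by (simp add: indicator_def)
  qed
  also have "\<dots> = (\<integral>\<^sup>+x. indicator A x \<partial>lborel)"
    by (rule nn_integral_shear[OF b]) simp
  also have "\<dots> = emeasure lborel A" by simp
  finally show "emeasure (distr lborel borel (shear b1 b2 t)) A = emeasure lborel A" .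
qed simp

definition rot :: "'a::euclidean_space \<Rightarrow> 'a \<Rightarrow> real \<Rightarrow> real \<Rightarrow> 'a \<Rightarrow> 'a" where
  "rot b1 b2 c s x = x + ((c - 1) * (x \<bullet> b1) + s * (x \<bullet> b2)) *\<^sub>R b1 + ((c - 1) * (x \<bullet> b2) - s * (x \<bullet> b1)) *\<^sub>R b2"

lemma rot_measurable[measurable]: "rot b1 b2 c s \<in> borel_measurable borel"
  unfolding rot_def by measurable

lemma rot_shears:
  assumes b: "b1 \<in> Basis" "b2 \<in> Basis" "b1 \<noteq> b2" and cs: "c\<^sup>2 + s\<^sup>2 = 1" "c \<noteq> -1"
  shows "rot b1 b2 c s = shear b1 b2 (s/(1+c)) \<circ> shear b2 b1 (-s) \<circ> shear b1 b2 (s/(1+c))"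
proof
  fix x :: 'a
  have o: "b1 \<bullet> b1 = 1" "b2 \<bullet> b2 = 1" "b1 \<bullet> b2 = 0" "b2 \<bullet> b1 = 0"
    using b by (auto simp: inner_Basis)
  have c1: "1 + c \<noteq> 0" using cs by auto
  define a where "a = s/(1+c)"
  define x1 where "x1 = x \<bullet> b1"
  define x2 where "x2 = x \<bullet> b2"
  have e1: "1 + a * (- s) = c" unfolding a_def using c1 cs
    by (simp add: field_simps power2_eq_square)
  have e2': "a * c + a = s"
  proof -
    have "a * c + a = a * (1 + c)" by (simp add: algebra_simps)
    then show ?thesis unfolding a_def using c1 by simp
  qed
  have e2: "a * (1 + a * (-s)) + a = s" unfolding e1 using e2' .
  have "(shear b1 b2 a \<circ> shear b2 b1 (-s) \<circ> shear b1 b2 a) x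
     = x + (a * x2 + a * (x2 - s * (x1 + a * x2))) *\<^sub>R b1 + (- s * (x1 + a * x2)) *\<^sub>R b2"
    by (simp add: shear_def inner_add_left o x1_def x2_def algebra_simps; simp only: scaleR_add_left[symmetric]; simp)
  also have "\<dots> = x + ((c - 1) * x1 + s * x2) *\<^sub>R b1 + ((c - 1) * x2 - s * x1) *\<^sub>R b2"
  proof -
    have "a * x2 + a * (x2 - s * (x1 + a * x2)) = (c - 1) * x1 + s * x2"
    proof -
      have "a * s = 1 - c" using e1 by (simp add: algebra_simps)
      moreover have "a * x2 + a * (x2 - s * (x1 + a * x2)) = (a * (1 + a * (-s)) + a) * x2 - (a * s) * x1"
        by (simp add: algebra_simps)
      ultimately have h: "c + a * s = 1" "s + a * (a * s) = a * 2" using e2 by (simp_all add: algebra_simps)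
      have h1: "c*x1 + a*(s*x1) = x1" using arg_cong[OF h(1), of "\<lambda>u. u * x1"] by (simp add: algebra_simps)
      have h2: "s*x2 + a*(a*(s*x2)) = a*(x2*2)" using arg_cong[OF h(2), of "\<lambda>u. u * x2"] by (simp add: algebra_simps)
      show ?thesis using h1 h2 by (simp add: algebra_simps)
    qed
    moreover have "- s * (x1 + a * x2) = (c - 1) * x2 - s * x1"
    proof -
      have "a * s = 1 - c" using e1 by (simp add: algebra_simps)
      then have "a * s * x2 = (1 - c) * x2" by simp
      then show ?thesis by (simp add: algebra_simps)
    qed
    ultimately show ?thesis by simp
  qed
  finally show "rot b1 b2 c s x = (shear b1 b2 (s/(1+c)) \<circ> shear b2 b1 (-s) \<circ> shear b1 b2 (s/(1+c))) x"
    by (simp add: rot_def x1_def x2_def a_def)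
qed

lemma rot_pi:
  assumes b: "b1 \<in> Basis" "b2 \<in> Basis" "b1 \<noteq> b2"
  shows "rot b1 b2 (-1) 0 = rot b1 b2 0 1 \<circ> rot b1 b2 0 1"
proof
  fix x :: 'a
  have o: "b1 \<bullet> b1 = 1" "b2 \<bullet> b2 = 1" "b1 \<bullet> b2 = 0" "b2 \<bullet> b1 = 0"
    using b by (auto simp: inner_Basis)
  show "rot b1 b2 (-1) 0 x = (rot b1 b2 0 1 \<circ> rot b1 b2 0 1) x"
  proof -
    have "rot b1 b2 0 1 (rot b1 b2 0 1 x) = x - (x \<bullet> b1) *\<^sub>R b1 - (x \<bullet> b1) *\<^sub>R b1 - (x \<bullet> b2) *\<^sub>R b2 - (x \<bullet> b2) *\<^sub>R b2"
      by (simp add: rot_def inner_add_left inner_diff_left o algebra_simps; simp only: mult_2_right scaleR_add_left add.assoc)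
    moreover have "rot b1 b2 (-1) 0 x = x - (x \<bullet> b1) *\<^sub>R b1 - (x \<bullet> b1) *\<^sub>R b1 - (x \<bullet> b2) *\<^sub>R b2 - (x \<bullet> b2) *\<^sub>R b2"
      by (simp add: rot_def algebra_simps; simp only: mult_2_right scaleR_add_left add.assoc)
    ultimately show ?thesis by simp
  qed
qed

lemma distr_rot:
  assumes b: "b1 \<in> Basis" "b2 \<in> Basis" "b1 \<noteq> b2" and cs: "c\<^sup>2 + s\<^sup>2 = 1"
  shows "distr lborel borel (rot b1 b2 c s) = (lborel :: 'a::euclidean_space measure)"
proof -
  have gen: "distr lborel borel (rot b1 b2 c s) = (lborel :: 'a measure)"
    if cs: "c\<^sup>2 + s\<^sup>2 = 1" "c \<noteq> -1" for c s
  proof -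
    have "distr lborel borel (rot b1 b2 c s) =
      distr (distr (distr lborel borel (shear b1 b2 (s/(1+c)))) borel (shear b2 b1 (-s))) borel (shear b1 b2 (s/(1+c)))"
      by (simp add: rot_shears[OF b cs] distr_distr comp_assoc)
    also have "\<dots> = lborel"
      using b by (simp add: distr_shear)
    finally show ?thesis .
  qed
  show ?thesis
  proof (cases "c = -1")
    case True
    then have "s = 0" using cs by (simp add: power2_eq_square)
    then have "distr lborel borel (rot b1 b2 c s) = distr (distr lborel borel (rot b1 b2 0 1)) borel (rot b1 b2 0 1)"
      using True by (simp add: rot_pi[OF b] distr_distr)
    also have "\<dots> = lborel" by (simp add: gen)
    finally show ?thesis .
  qed (use gen cs in auto)
qed

lemma rot_inner:
  assumes b: "b1 \<in> Basis" "b2 \<in> Basis" "b1 \<noteq> b2" and cs: "c\<^sup>2 + s\<^sup>2 = 1"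
  shows "rot b1 b2 c s x \<bullet> rot b1 b2 c s y = x \<bullet> y"
proof -
  have o: "b1 \<bullet> b1 = 1" "b2 \<bullet> b2 = 1" "b1 \<bullet> b2 = 0" "b2 \<bullet> b1 = 0"
    using b by (auto simp: inner_Basis)
  define x1 where "x1 = x \<bullet> b1"
  define x2 where "x2 = x \<bullet> b2"
  define y1 where "y1 = y \<bullet> b1"
  define y2 where "y2 = y \<bullet> b2"
  have "rot b1 b2 c s x \<bullet> rot b1 b2 c s y = x \<bullet> y +
     (((c - 1) * y1 + s * y2) * x1 + ((c - 1) * y2 - s * y1) * x2 + ((c - 1) * x1 + s * x2) * y1
      + ((c - 1) * x1 + s * x2) * ((c - 1) * y1 + s * y2) + ((c - 1) * x2 - s * x1) * y2
      + ((c - 1) * x2 - s * x1) * ((c - 1) * y2 - s * y1))"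
    unfolding rot_def inner_add_left inner_add_right inner_scaleR_left inner_scaleR_right o
    by (simp add: x1_def x2_def y1_def y2_def inner_commute[of b1] inner_commute[of b2]; simp add: algebra_simps)
  also have "\<dots> = x \<bullet> y" using cs by algebra
  finally show ?thesis .
qed
lemma axis_Basis: "axis i (1::real) \<in> (Basis :: (real,'n::finite) vec set)"
  by (auto simp: Basis_vec_def)

lemma axis_comp: "axis i (1::real) $ k = (if k = i then 1 else 0)"
  by (simp add: axis_def)

lemma vij_rot:
  fixes v :: "(real,'n::finite) vec"
  assumes "i \<noteq> j"
  shows "vij v i j \<theta> = rot (axis i 1) (axis j 1) (cos \<theta>) (sin \<theta>) v"
  using assms by (auto simp: vec_eq_iff vij_def rot_def inner_axis axis_comp algebra_simps)

lemma axis_ne: "i \<noteq> j \<Longrightarrow> axis i (1::real) \<noteq> axis j 1"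
  by (simp add: axis_eq_axis)

lemma prod_Basis1: "(axis j (1::real), 0::real) \<in> (Basis :: ((real,'n::finite) vec \<times> real) set)"
  by (auto simp: Basis_prod_def axis_Basis)
lemma prod_Basis2: "(0::(real,'n::finite) vec, 1::real) \<in> (Basis :: ((real,'n::finite) vec \<times> real) set)"
  by (auto simp: Basis_prod_def)

lemma vjw_rot:
  fixes v :: "(real,'n::finite) vec"
  shows "rot (axis j 1, 0) (0, 1) (cos \<theta>) (sin \<theta>) (v, w) = (vjw v j w \<theta>, w * cos \<theta> - v$j * sin \<theta>)"
  by (auto simp: vec_eq_iff vjw_def rot_def inner_axis axis_comp algebra_simps)

definition xjt :: "(real,'n::finite) vec \<Rightarrow> 'n \<Rightarrow> real \<Rightarrow> (real,'n) vec" where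
  "xjt \<xi> j \<theta> = (\<chi> k. if k = j then \<xi>$j * cos \<theta> else \<xi>$k)"

lemma inner_vec_split:
  fixes x y :: "(real,'n::finite) vec"
  shows "x \<bullet> y = x$j * y$j + (\<Sum>k\<in>UNIV-{j}. x$k * y$k)"
  by (simp add: inner_vec_def sum.remove)

lemma vjw_inner:
  fixes v \<xi> :: "(real,'n::finite) vec"
  shows "v \<bullet> \<xi> = vjw v j w \<theta> \<bullet> xjt \<xi> j \<theta> - (w * cos \<theta> - v$j * sin \<theta>) * sin \<theta> * \<xi>$j"
proof -
  have s: "(\<Sum>k\<in>UNIV-{j}. vjw v j w \<theta> $ k * xjt \<xi> j \<theta> $ k) = (\<Sum>k\<in>UNIV-{j}. v $ k * \<xi> $ k)"
    by (rule sum.cong) (auto simp: vjw_def xjt_def)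
  have "(sin \<theta>)\<^sup>2 + (cos \<theta>)\<^sup>2 = 1" by simp
  then show ?thesis
    unfolding inner_vec_split[of v \<xi> j] inner_vec_split[of "vjw v j w \<theta>" "xjt \<xi> j \<theta>" j] s
    by (simp add: vjw_def xjt_def) (use sin_cos_squared_add[of \<theta>] in algebra)
qed

lemma norm_xjt_sq:
  fixes \<xi> :: "(real,'n::finite) vec"
  shows "(norm (xjt \<xi> j \<theta>))\<^sup>2 = (norm \<xi>)\<^sup>2 - (\<xi>$j)\<^sup>2 * (sin \<theta>)\<^sup>2"
proof -
  have s: "(\<Sum>k\<in>UNIV-{j}. xjt \<xi> j \<theta> $ k * xjt \<xi> j \<theta> $ k) = (\<Sum>k\<in>UNIV-{j}. \<xi> $ k * \<xi> $ k)"
    by (rule sum.cong) (auto simp: xjt_def)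
  have "(sin \<theta>)\<^sup>2 + (cos \<theta>)\<^sup>2 = 1" by simp
  then show ?thesis
    unfolding power2_norm_eq_inner inner_vec_split[of \<xi> \<xi> j] inner_vec_split[of "xjt \<xi> j \<theta>" "xjt \<xi> j \<theta>" j] s
    by (simp add: xjt_def) (use sin_cos_squared_add[of \<theta>] in algebra)
qed

lemma lborel_integral_rot:
  fixes f :: "'a::euclidean_space \<Rightarrow> 'b::{banach, second_countable_topology}"
  assumes b: "b1 \<in> Basis" "b2 \<in> Basis" "b1 \<noteq> b2" and cs: "c\<^sup>2 + s\<^sup>2 = 1"
    and f: "f \<in> borel_measurable borel"
  shows "(LINT x|lborel. f (rot b1 b2 c s x)) = (LINT x|lborel. f x)"
  using integral_distr[of "rot b1 b2 c s" lborel borel f] distr_rot[OF b cs] f by simp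

lemma lborel_nn_integral_rot:
  fixes f :: "'a::euclidean_space \<Rightarrow> ennreal"
  assumes b: "b1 \<in> Basis" "b2 \<in> Basis" "b1 \<noteq> b2" and cs: "c\<^sup>2 + s\<^sup>2 = 1"
    and f: "f \<in> borel_measurable borel"
  shows "(\<integral>\<^sup>+x. f (rot b1 b2 c s x) \<partial>lborel) = (\<integral>\<^sup>+x. f x \<partial>lborel)"
  using nn_integral_distr[of "rot b1 b2 c s" lborel borel f] distr_rot[OF b cs] f by simp

lemma density_nn_one:
  assumes "is_density G"
  shows "(\<integral>\<^sup>+x. ennreal (G x) \<partial>lborel) = 1"
  using assms unfolding is_density_def by (subst nn_integral_eq_integral) auto

lemma cis_meas[measurable]: "cis \<in> borel_measurable borel"
  by (intro borel_measurable_continuous_onI continuous_intros)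

lemma density_meas:
  assumes "is_density G" shows "G \<in> borel_measurable borel"
  using assms unfolding is_density_def by simp

lemma emeasure_Icc_2pi: "emeasure lborel {0..2*pi} = ennreal (2*pi)" by simp

lemma Q_fourier:
  fixes G :: "(real,'n::finite) vec \<Rightarrow> real" and \<xi> :: "(real,'n) vec"
  assumes G: "is_density G" and ij: "i \<noteq> j"
  shows "integrable lborel (\<lambda>v. complex_of_real ((1/(2*pi)) * (LBINT \<theta>=0..2*pi. G (vij v i j \<theta>))) * cis (-(v \<bullet> \<xi>)))"
   and "(LINT v|lborel. complex_of_real ((1/(2*pi)) * (LBINT \<theta>=0..2*pi. G (vij v i j \<theta>))) * cis (-(v \<bullet> \<xi>)))
        = (1/(2*pi)) * (LINT \<theta>|lborel. indicator {0..2*pi} \<theta> * fourier G (vij \<xi> i j \<theta>))"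
   and "integrable lborel (\<lambda>\<theta>. indicator {0..2*pi} \<theta> * fourier G (vij \<xi> i j \<theta>) :: complex)"
proof -
  have Gm[measurable]: "G \<in> borel_measurable borel" using G by (rule density_meas)
  have Gnn: "\<And>x. 0 \<le> G x" using G unfolding is_density_def by simp
  define b1 where "b1 = (axis i 1 :: (real,'n) vec)"
  define b2 where "b2 = (axis j 1 :: (real,'n) vec)"
  have b: "b1 \<in> Basis" "b2 \<in> Basis" "b1 \<noteq> b2"
    using ij by (auto simp: b1_def b2_def axis_Basis axis_ne)
  have cs: "\<And>\<theta>::real. (cos \<theta>)\<^sup>2 + (sin \<theta>)\<^sup>2 = 1" by simp
  have V: "\<And>v \<theta>. vij v i j \<theta> = rot b1 b2 (cos \<theta>) (sin \<theta>) v"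
    using ij by (simp add: vij_rot b1_def b2_def)
  define K where "K = (\<lambda>(\<theta>::real) (v::(real,'n) vec). indicator {0..2*pi} \<theta> * complex_of_real (G (rot b1 b2 (cos \<theta>) (sin \<theta>) v)) * cis (-(v \<bullet> \<xi>)))"
  have Rm: "(\<lambda>p::real \<times> (real,'n) vec. rot b1 b2 (cos (fst p)) (sin (fst p)) (snd p)) \<in> borel_measurable (lborel \<Otimes>\<^sub>M lborel)"
    unfolding rot_def by measurable
  have GRm[measurable]: "(\<lambda>p::real \<times> (real,'n) vec. G (rot b1 b2 (cos (fst p)) (sin (fst p)) (snd p))) \<in> borel_measurable (lborel \<Otimes>\<^sub>M lborel)"
    using measurable_compose[OF Rm Gm] by (simp add: comp_def)
  have Km[measurable]: "case_prod K \<in> borel_measurable (lborel \<Otimes>\<^sub>M lborel)"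
    unfolding K_def split_beta' by measurable
  have inner1: "(\<integral>\<^sup>+v. ennreal (G (rot b1 b2 (cos \<theta>) (sin \<theta>) v)) \<partial>lborel) = 1" for \<theta>
    using lborel_nn_integral_rot[OF b cs, of "\<lambda>x. ennreal (G x)" \<theta>] density_nn_one[OF G] by simp
  have normK: "norm (K \<theta> v) = indicator {0..2*pi} \<theta> * G (rot b1 b2 (cos \<theta>) (sin \<theta>) v)" for \<theta> v
    by (simp add: K_def norm_mult Gnn indicator_def)
  have "(\<integral>\<^sup>+p. ennreal (norm (case_prod K p)) \<partial>(lborel \<Otimes>\<^sub>M lborel)) = (\<integral>\<^sup>+\<theta>. \<integral>\<^sup>+v. ennreal (norm (K \<theta> v)) \<partial>lborel \<partial>lborel)"
    by (subst lborel.nn_integral_fst[symmetric]) auto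
  also have "\<dots> = (\<integral>\<^sup>+\<theta>. indicator {0..2*pi} \<theta> * (\<integral>\<^sup>+v. ennreal (G (rot b1 b2 (cos \<theta>) (sin \<theta>) v)) \<partial>lborel) \<partial>lborel)"
    unfolding normK by (subst nn_integral_cmult[symmetric]) (auto simp: ennreal_mult' Gnn ennreal_indicator intro!: nn_integral_cong)
  also have "\<dots> = 2 * pi" by (simp add: inner1)
  finally have Kint: "integrable (lborel \<Otimes>\<^sub>M lborel) (case_prod K)"
    by (intro integrableI_bounded) auto
  have eq1: "complex_of_real ((1/(2*pi)) * (LBINT \<theta>=0..2*pi. G (vij v i j \<theta>))) * cis (-(v \<bullet> \<xi>))
      = (1/(2*pi)) * (LINT \<theta>|lborel. K \<theta> v)" for v
  proof -
    have "(LBINT \<theta>=0..2*pi. G (vij v i j \<theta>)) = (LINT \<theta>|lborel. indicator {0..2*pi} \<theta> * G (vij v i j \<theta>))"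
      by (simp add: zero_ereal_def interval_integral_Icc set_lebesgue_integral_def)
    then have h: "(LBINT \<theta>=0..2*pi. G (vij v i j \<theta>)) = (LINT \<theta>|lborel. indicator {0..2*pi} \<theta> * G (vij v i j \<theta>))" .
    have "complex_of_real ((1/(2*pi)) * (LBINT \<theta>=0..2*pi. G (vij v i j \<theta>))) * cis (-(v \<bullet> \<xi>))
       = (1/(2*pi)) * (complex_of_real (LINT \<theta>|lborel. indicator {0..2*pi} \<theta> * G (vij v i j \<theta>)) * cis (-(v \<bullet> \<xi>)))"
      unfolding h by simp
    also have "complex_of_real (LINT \<theta>|lborel. indicator {0..2*pi} \<theta> * G (vij v i j \<theta>)) * cis (-(v \<bullet> \<xi>))
       = (LINT \<theta>|lborel. complex_of_real (indicator {0..2*pi} \<theta> * G (vij v i j \<theta>)) * cis (-(v \<bullet> \<xi>)))"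
      by (simp only: integral_mult_left_zero integral_complex_of_real)
    also have "\<dots> = (LINT \<theta>|lborel. K \<theta> v)"
      unfolding K_def by (rule Bochner_Integration.integral_cong[OF refl]) (auto simp: V indicator_def)
    finally show ?thesis .
  qed
  have eq2: "(LINT v|lborel. K \<theta> v) = indicator {0..2*pi} \<theta> * fourier G (vij \<xi> i j \<theta>)" for \<theta>
  proof -
    have "(LINT v|lborel. K \<theta> v) = indicator {0..2*pi} \<theta> *
        (LINT v|lborel. complex_of_real (G (rot b1 b2 (cos \<theta>) (sin \<theta>) v)) * cis (-(rot b1 b2 (cos \<theta>) (sin \<theta>) v \<bullet> rot b1 b2 (cos \<theta>) (sin \<theta>) \<xi>)))"
      by (simp add: K_def rot_inner[OF b cs] mult.assoc)
    also have "(LINT v|lborel. complex_of_real (G (rot b1 b2 (cos \<theta>) (sin \<theta>) v)) * cis (-(rot b1 b2 (cos \<theta>) (sin \<theta>) v \<bullet> rot b1 b2 (cos \<theta>) (sin \<theta>) \<xi>)))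
        = fourier G (rot b1 b2 (cos \<theta>) (sin \<theta>) \<xi>)"
      unfolding fourier_def
      by (rule lborel_integral_rot[OF b cs, of "\<lambda>u. complex_of_real (G u) * cis (-(u \<bullet> rot b1 b2 (cos \<theta>) (sin \<theta>) \<xi>))"]) measurable
    finally show ?thesis by (simp add: V)
  qed
  show "integrable lborel (\<lambda>v. complex_of_real ((1/(2*pi)) * (LBINT \<theta>=0..2*pi. G (vij v i j \<theta>))) * cis (-(v \<bullet> \<xi>)))"
    unfolding eq1 using lborel_pair.integrable_snd[OF Kint] by simp
  show "integrable lborel (\<lambda>\<theta>. indicator {0..2*pi} \<theta> * fourier G (vij \<xi> i j \<theta>) :: complex)"
    using lborel_pair.integrable_fst[OF Kint] by (simp add: eq2)
  show "(LINT v|lborel. complex_of_real ((1/(2*pi)) * (LBINT \<theta>=0..2*pi. G (vij v i j \<theta>))) * cis (-(v \<bullet> \<xi>)))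
        = (1/(2*pi)) * (LINT \<theta>|lborel. indicator {0..2*pi} \<theta> * fourier G (vij \<xi> i j \<theta>))"
    unfolding eq1 integral_mult_right_zero lborel_pair.integral_snd[OF Kint] lborel_pair.integral_fst[OF Kint, symmetric] eq2 ..
qed

lemma R_fourier:
  fixes G :: "(real,'n::finite) vec \<Rightarrow> real" and \<xi> :: "(real,'n) vec" and g :: "real \<Rightarrow> real" and j :: 'n
  assumes G: "is_density G" and g: "is_density g"
  defines "gh \<equiv> (\<lambda>\<theta>. LINT w|lborel. complex_of_real (g w) * cis (w * sin \<theta> * \<xi>$j))"
  shows "integrable lborel (\<lambda>v. complex_of_real (Rop g G j v) * cis (-(v \<bullet> \<xi>)))"
   and "(LINT v|lborel. complex_of_real (Rop g G j v) * cis (-(v \<bullet> \<xi>)))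
        = (1/(2*pi)) * (LINT \<theta>|lborel. indicator {0..2*pi} \<theta> * (gh \<theta> * fourier G (xjt \<xi> j \<theta>)))"
   and "integrable lborel (\<lambda>\<theta>. indicator {0..2*pi} \<theta> * (gh \<theta> * fourier G (xjt \<xi> j \<theta>)) :: complex)"
proof -
  have Gm[measurable]: "G \<in> borel_measurable borel" using G by (rule density_meas)
  have gm[measurable]: "g \<in> borel_measurable borel" using g by (rule density_meas)
  have Gnn: "\<And>x. 0 \<le> G x" using G unfolding is_density_def by simp
  have gnn: "\<And>x. 0 \<le> g x" using g unfolding is_density_def by simp
  define b1 where "b1 = ((axis j 1, 0) :: (real,'n) vec \<times> real)"
  define b2 where "b2 = ((0, 1) :: (real,'n) vec \<times> real)"
  have b: "b1 \<in> Basis" "b2 \<in> Basis" "b1 \<noteq> b2"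
    by (auto simp: b1_def b2_def prod_Basis1 prod_Basis2)
  have cs: "\<And>\<theta>::real. (cos \<theta>)\<^sup>2 + (sin \<theta>)\<^sup>2 = 1" by simp
  define T where "T = (\<lambda>\<theta>. rot b1 b2 (cos \<theta>) (sin \<theta>))"
  have Tvw: "T \<theta> (v, w) = (vjw v j w \<theta>, w * cos \<theta> - v$j * sin \<theta>)" for \<theta> v w
    unfolding T_def b1_def b2_def by (rule vjw_rot)
  define P where "P = (\<lambda>q::(real,'n) vec \<times> real. g (snd q) * G (fst q))"
  have Pm[measurable]: "P \<in> borel_measurable borel" unfolding P_def borel_prod[symmetric] by measurable
  have Pnn: "\<And>q. 0 \<le> P q" by (simp add: P_def Gnn gnn)
  have P1: "(\<integral>\<^sup>+q. ennreal (P q) \<partial>lborel) = 1"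
  proof -
    have "(\<integral>\<^sup>+q. ennreal (P q) \<partial>lborel) = (\<integral>\<^sup>+q. ennreal (P q) \<partial>(lborel \<Otimes>\<^sub>M lborel))"
      by (simp add: lborel_prod)
    also have "\<dots> = (\<integral>\<^sup>+v. \<integral>\<^sup>+w. ennreal (G v) * ennreal (g w) \<partial>lborel \<partial>lborel)"
      by (subst lborel.nn_integral_fst[symmetric]) (auto simp: P_def ennreal_mult' gnn Gnn mult.commute)
    also have "\<dots> = (\<integral>\<^sup>+v. ennreal (G v) * (\<integral>\<^sup>+w. ennreal (g w) \<partial>lborel) \<partial>lborel)"
      by (subst nn_integral_cmult) auto
    also have "\<dots> = 1" by (simp add: density_nn_one[OF g] density_nn_one[OF G])
    finally show ?thesis .
  qed
  define K where "K = (\<lambda>(\<theta>::real) (p::(real,'n) vec \<times> real). indicator {0..2*pi} \<theta> * complex_of_real (P (T \<theta> p)) * cis (-(fst p \<bullet> \<xi>)))"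
  have BM: "borel_measurable (lborel \<Otimes>\<^sub>M lborel :: (real \<times> ((real,'n) vec \<times> real)) measure) = borel_measurable borel"
    by (simp add: lborel_prod)
  have Tm: "(\<lambda>x::real \<times> ((real,'n) vec \<times> real). T (fst x) (snd x)) \<in> borel_measurable (lborel \<Otimes>\<^sub>M lborel)"
    unfolding BM T_def rot_def by (intro borel_measurable_continuous_onI continuous_intros)
  have PTm[measurable]: "(\<lambda>x::real \<times> ((real,'n) vec \<times> real). P (T (fst x) (snd x))) \<in> borel_measurable (lborel \<Otimes>\<^sub>M lborel)"
    using measurable_compose[OF Tm Pm] by (simp add: comp_def)
  have Cm[measurable]: "(\<lambda>x::real \<times> ((real,'n) vec \<times> real). cis (-(fst (snd x) \<bullet> \<xi>))) \<in> borel_measurable (lborel \<Otimes>\<^sub>M lborel)"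
    unfolding BM by (intro borel_measurable_continuous_onI continuous_intros)
  have PTm1[measurable]: "(\<lambda>p. P (T \<theta> p)) \<in> borel_measurable borel" for \<theta>
    using measurable_compose[OF rot_measurable Pm] by (simp add: comp_def T_def)
  have Km[measurable]: "case_prod K \<in> borel_measurable (lborel \<Otimes>\<^sub>M lborel)"
  proof -
    have "case_prod K = (\<lambda>x. indicator {0..2*pi} (fst x) * complex_of_real (P (T (fst x) (snd x))) * cis (-(fst (snd x) \<bullet> \<xi>)))"
      by (auto simp: K_def fun_eq_iff)
    then show ?thesis by simp
  qed
  have inner1: "(\<integral>\<^sup>+p. ennreal (P (T \<theta> p)) \<partial>lborel) = 1" for \<theta>
    using lborel_nn_integral_rot[OF b cs, of "\<lambda>x. ennreal (P x)" \<theta>] P1 by (simp add: T_def)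
  have normK: "norm (K \<theta> p) = indicator {0..2*pi} \<theta> * P (T \<theta> p)" for \<theta> p
    by (simp add: K_def norm_mult Pnn indicator_def)
  have "(\<integral>\<^sup>+x. ennreal (norm (case_prod K x)) \<partial>(lborel \<Otimes>\<^sub>M lborel)) = (\<integral>\<^sup>+\<theta>. \<integral>\<^sup>+p. ennreal (norm (K \<theta> p)) \<partial>lborel \<partial>lborel)"
    by (subst lborel.nn_integral_fst[symmetric]) auto
  also have "\<dots> = (\<integral>\<^sup>+\<theta>. indicator {0..2*pi} \<theta> * (\<integral>\<^sup>+p. ennreal (P (T \<theta> p)) \<partial>lborel) \<partial>lborel)"
    unfolding normK by (subst nn_integral_cmult[symmetric]) (auto simp: ennreal_mult' Pnn ennreal_indicator intro!: nn_integral_cong)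
  also have "\<dots> = 2 * pi" by (simp add: inner1)
  finally have Kint: "integrable (lborel \<Otimes>\<^sub>M lborel) (case_prod K)"
    by (intro integrableI_bounded) auto
  define f where "f = (\<lambda>p. LINT \<theta>|lborel. K \<theta> p)"
  have fint: "integrable lborel f"
    unfolding f_def using lborel_pair.integrable_snd[OF Kint] .
  have fint2: "integrable (lborel \<Otimes>\<^sub>M lborel) (\<lambda>(v::(real,'n) vec, w::real). f (v, w))"
    using fint by (simp add: lborel_prod)
  have eq1: "complex_of_real (Rop g G j v) * cis (-(v \<bullet> \<xi>)) = (1/(2*pi)) * (LINT w|lborel. f (v, w))" for v
  proof -
    have h: "(LBINT \<theta>=0..2*pi. g (w * cos \<theta> - v$j * sin \<theta>) * G (vjw v j w \<theta>))
        = (LINT \<theta>|lborel. indicator {0..2*pi} \<theta> * P (T \<theta> (v, w)))" for w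
      by (simp add: zero_ereal_def interval_integral_Icc set_lebesgue_integral_def Tvw P_def)
    have "complex_of_real (Rop g G j v) * cis (-(v \<bullet> \<xi>))
      = complex_of_real (LINT w|lborel. (1/(2*pi)) * (LINT \<theta>|lborel. indicator {0..2*pi} \<theta> * P (T \<theta> (v, w)))) * cis (-(v \<bullet> \<xi>))"
      unfolding Rop_def h ..
    also have "\<dots> = (LINT w|lborel. complex_of_real ((1/(2*pi)) * (LINT \<theta>|lborel. indicator {0..2*pi} \<theta> * P (T \<theta> (v, w)))) * cis (-(v \<bullet> \<xi>)))"
      by (simp only: integral_mult_left_zero integral_complex_of_real)
    also have "\<dots> = (LINT w|lborel. (1/(2*pi)) * (LINT \<theta>|lborel. complex_of_real (indicator {0..2*pi} \<theta> * P (T \<theta> (v, w))) * cis (-(v \<bullet> \<xi>))))"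
    proof (rule Bochner_Integration.integral_cong[OF refl])
      fix w
      have e: "complex_of_real (LINT \<theta>|lborel. indicator {0..2*pi} \<theta> * P (T \<theta> (v, w))) * cis (-(v \<bullet> \<xi>))
          = (LINT \<theta>|lborel. complex_of_real (indicator {0..2*pi} \<theta> * P (T \<theta> (v, w))) * cis (-(v \<bullet> \<xi>)))"
        by (simp only: integral_mult_left_zero integral_complex_of_real)
      show "complex_of_real ((1/(2*pi)) * (LINT \<theta>|lborel. indicator {0..2*pi} \<theta> * P (T \<theta> (v, w)))) * cis (-(v \<bullet> \<xi>))
          = (1/(2*pi)) * (LINT \<theta>|lborel. complex_of_real (indicator {0..2*pi} \<theta> * P (T \<theta> (v, w))) * cis (-(v \<bullet> \<xi>)))"
        using e by (simp only: of_real_mult mult.assoc)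
    qed
    also have "\<dots> = (1/(2*pi)) * (LINT w|lborel. f (v, w))"
      unfolding integral_mult_right_zero f_def K_def
      by (rule arg_cong[where f="\<lambda>x. _ * x"], rule Bochner_Integration.integral_cong[OF refl],
          rule Bochner_Integration.integral_cong[OF refl]) (auto simp: indicator_def)
    finally show ?thesis .
  qed
  have hint: "integrable lborel (\<lambda>q::(real,'n) vec \<times> real. complex_of_real (P q) * cis (-(fst q \<bullet> xjt \<xi> j \<theta>) + snd q * sin \<theta> * \<xi>$j))" for \<theta>
  proof (rule integrableI_bounded)
    have cm[measurable]: "(\<lambda>q::(real,'n) vec \<times> real. cis (-(fst q \<bullet> xjt \<xi> j \<theta>) + snd q * sin \<theta> * \<xi>$j)) \<in> borel_measurable borel"
      by (intro borel_measurable_continuous_onI continuous_intros)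
    show "(\<lambda>q::(real,'n) vec \<times> real. complex_of_real (P q) * cis (-(fst q \<bullet> xjt \<xi> j \<theta>) + snd q * sin \<theta> * \<xi>$j)) \<in> borel_measurable lborel"
      by measurable
    show "(\<integral>\<^sup>+q. ennreal (norm (complex_of_real (P q) * cis (-(fst q \<bullet> xjt \<xi> j \<theta>) + snd q * sin \<theta> * \<xi>$j))) \<partial>lborel) < \<infinity>"
      by (simp add: norm_mult Pnn P1)
  qed
  have eq2: "(LINT p|lborel. K \<theta> p) = indicator {0..2*pi} \<theta> * (gh \<theta> * fourier G (xjt \<xi> j \<theta>))" for \<theta>
  proof -
    define h where "h = (\<lambda>q::(real,'n) vec \<times> real. complex_of_real (P q) * cis (-(fst q \<bullet> xjt \<xi> j \<theta>) + snd q * sin \<theta> * \<xi>$j))"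
    have cm[measurable]: "(\<lambda>q::(real,'n) vec \<times> real. cis (-(fst q \<bullet> xjt \<xi> j \<theta>) + snd q * sin \<theta> * \<xi>$j)) \<in> borel_measurable borel"
      by (intro borel_measurable_continuous_onI continuous_intros)
    have hm: "h \<in> borel_measurable borel" unfolding h_def by measurable
    have Kh: "K \<theta> p = indicator {0..2*pi} \<theta> * h (T \<theta> p)" for p
    proof (cases p)
      case (Pair v w)
      show ?thesis unfolding K_def h_def Pair Tvw
        by (simp add: vjw_inner[of v \<xi> j w \<theta>] algebra_simps)
    qed
    have "(LINT p|lborel. K \<theta> p) = indicator {0..2*pi} \<theta> * (LINT p|lborel. h (T \<theta> p))"
      unfolding Kh by simp
    also have "(LINT p|lborel. h (T \<theta> p)) = (LINT q|lborel. h q)"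
      unfolding T_def by (rule lborel_integral_rot[OF b cs hm])
    also have "\<dots> = (LINT q|(lborel \<Otimes>\<^sub>M lborel). h q)"
      by (simp add: lborel_prod)
    also have "\<dots> = (LINT v|lborel. LINT w|lborel. h (v, w))"
    proof -
      have "integrable (lborel \<Otimes>\<^sub>M lborel) h"
        using hint[of \<theta>] unfolding h_def[symmetric] by (simp add: lborel_prod)
      then show ?thesis using lborel_pair.integral_fst[of "\<lambda>v w. h (v, w)"] by simp
    qed
    also have "\<dots> = (LINT v|lborel. complex_of_real (G v) * cis (-(v \<bullet> xjt \<xi> j \<theta>)) * gh \<theta>)"
    proof (rule Bochner_Integration.integral_cong[OF refl])
      fix v :: "(real,'n) vec"
      have "(LINT w|lborel. h (v, w)) = (LINT w|lborel. (complex_of_real (G v) * cis (-(v \<bullet> xjt \<xi> j \<theta>))) * (complex_of_real (g w) * cis (w * sin \<theta> * \<xi>$j)))"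
        unfolding h_def P_def
        by (rule Bochner_Integration.integral_cong[OF refl]) (simp add: cis_mult algebra_simps)
      also have "\<dots> = complex_of_real (G v) * cis (-(v \<bullet> xjt \<xi> j \<theta>)) * gh \<theta>"
        unfolding gh_def by (rule integral_mult_right_zero)
      finally show "(LINT w|lborel. h (v, w)) = complex_of_real (G v) * cis (-(v \<bullet> xjt \<xi> j \<theta>)) * gh \<theta>" .
    qed
    also have "\<dots> = gh \<theta> * fourier G (xjt \<xi> j \<theta>)"
      unfolding fourier_def by (simp add: mult.commute)
    finally show ?thesis .
  qed
  have eq3: "(LINT v|lborel. LINT w|lborel. f (v, w)) = (LINT p|lborel. f p)"
    using lborel_pair.integral_fst[OF fint2] by (simp add: lborel_prod)
  show "integrable lborel (\<lambda>v. complex_of_real (Rop g G j v) * cis (-(v \<bullet> \<xi>)))"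
    unfolding eq1 using lborel_pair.integrable_fst[OF fint2] by simp
  show "integrable lborel (\<lambda>\<theta>. indicator {0..2*pi} \<theta> * (gh \<theta> * fourier G (xjt \<xi> j \<theta>)) :: complex)"
    using lborel_pair.integrable_fst[OF Kint] by (simp add: eq2)
  show "(LINT v|lborel. complex_of_real (Rop g G j v) * cis (-(v \<bullet> \<xi>)))
        = (1/(2*pi)) * (LINT \<theta>|lborel. indicator {0..2*pi} \<theta> * (gh \<theta> * fourier G (xjt \<xi> j \<theta>)))"
  proof -
    have "(LINT v|lborel. complex_of_real (Rop g G j v) * cis (-(v \<bullet> \<xi>))) = (1/(2*pi)) * (LINT v|lborel. LINT w|lborel. f (v, w))"
      by (simp only: eq1 integral_mult_right_zero)
    also have "\<dots> = (1/(2*pi)) * (LINT p|lborel. f p)" by (simp only: eq3)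
    also have "(LINT p|lborel. f p) = (LINT \<theta>|lborel. LINT p|lborel. K \<theta> p)"
      unfolding f_def lborel_pair.integral_snd[OF Kint] lborel_pair.integral_fst[OF Kint, symmetric] ..
    finally show ?thesis by (simp only: eq2)
  qed
qed

lemma ind_integrable:
  fixes f :: "real \<Rightarrow> 'a::{banach, second_countable_topology, real_normed_algebra_1}"
  assumes "continuous_on {0..2*pi} f"
  shows "integrable lborel (\<lambda>\<theta>. indicator {0..2*pi} \<theta> * f \<theta>)"
proof -
  have "integrable lborel (\<lambda>\<theta>. indicator {0..2*pi} \<theta> *\<^sub>R f \<theta>)"
    using borel_integrable_atLeastAtMost'[OF assms] unfolding set_integrable_def .
  moreover have "\<And>\<theta>. indicator {0..2*pi} \<theta> * f \<theta> = indicator {0..2*pi} \<theta> *\<^sub>R f \<theta>"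
    by (simp add: indicator_def)
  ultimately show ?thesis by simp
qed

lemma ind_const_int: "(LINT \<theta>|lborel. indicator {0..2*pi} \<theta> * (c::real)) = 2 * pi * c"
  by (simp add: mult.commute[of _ c] measure_def)

lemma sin2_int: "(LINT \<theta>|lborel. indicator {0..2*pi} \<theta> * (sin \<theta>)\<^sup>2) = pi"
proof -
  have "(LBINT \<theta>=ereal 0..ereal (2*pi). (sin \<theta>)\<^sup>2) = (\<lambda>\<theta>. (\<theta> - sin \<theta> * cos \<theta>) / 2) (2*pi) - (\<lambda>\<theta>. (\<theta> - sin \<theta> * cos \<theta>) / 2) 0"
  proof (rule interval_integral_FTC_finite)
    show "continuous_on {min 0 (2*pi)..max 0 (2*pi)} (\<lambda>\<theta>. (sin \<theta>)\<^sup>2)"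
      by (intro continuous_intros)
    fix x :: real
    have "((\<lambda>\<theta>. (\<theta> - sin \<theta> * cos \<theta>) / 2) has_real_derivative ((1 - (cos x * cos x - sin x * sin x)) / 2)) (at x)"
      by (auto intro!: derivative_eq_intros)
    moreover have "(1 - (cos x * cos x - sin x * sin x)) / 2 = (sin x)\<^sup>2"
      using sin_cos_squared_add[of x] by (simp add: power2_eq_square algebra_simps)
    ultimately show "((\<lambda>\<theta>. (\<theta> - sin \<theta> * cos \<theta>) / 2) has_vector_derivative (sin x)\<^sup>2) (at x within {min 0 (2*pi)..max 0 (2*pi)})"
      by (auto simp: has_real_derivative_iff_has_vector_derivative[symmetric] intro: has_field_derivative_at_within)
  qed
  then have "(LBINT \<theta>=0..2*pi. (sin \<theta>)\<^sup>2) = pi" by (simp add: zero_ereal_def)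
  then show ?thesis
    by (simp add: zero_ereal_def interval_integral_Icc set_lebesgue_integral_def)
qed

lemma gh_bound:
  assumes g: "is_density g"
  shows "norm (LINT w|lborel. complex_of_real (g w) * cis (w * a)) \<le> 1"
proof -
  have "norm (LINT w|lborel. complex_of_real (g w) * cis (w * a)) \<le> (LINT w|lborel. norm (complex_of_real (g w) * cis (w * a)))"
    by (rule integral_norm_bound)
  also have "\<dots> = (LINT w|lborel. g w)"
    using g unfolding is_density_def by (simp add: norm_mult)
  also have "\<dots> = 1" using g unfolding is_density_def by simp
  finally show ?thesis .
qed

lemma norm_vij:
  fixes \<xi> :: "(real,'n::finite) vec"
  assumes "i \<noteq> j" shows "norm (vij \<xi> i j \<theta>) = norm \<xi>"
proof -
  have "vij \<xi> i j \<theta> \<bullet> vij \<xi> i j \<theta> = \<xi> \<bullet> \<xi>"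
    unfolding vij_rot[OF assms] by (rule rot_inner) (use assms in \<open>auto simp: axis_Basis axis_ne\<close>)
  then show ?thesis by (simp add: norm_eq_sqrt_inner)
qed

lemma norm_xjt_le:
  fixes \<xi> :: "(real,'n::finite) vec"
  assumes "\<xi> \<noteq> 0"
  shows "norm (xjt \<xi> j \<theta>) \<le> norm \<xi> - (\<xi>$j)\<^sup>2 * (sin \<theta>)\<^sup>2 / (2 * norm \<xi>)"
proof -
  define a where "a = norm \<xi>"
  define b where "b = (\<xi>$j)\<^sup>2 * (sin \<theta>)\<^sup>2"
  have a: "a > 0" using assms by (simp add: a_def)
  have b0: "0 \<le> b" by (simp add: b_def)
  have "(\<xi>$j)\<^sup>2 \<le> a\<^sup>2"
  proof -
    have "\<bar>\<xi>$j\<bar> \<le> a" unfolding a_def by (rule component_le_norm_cart)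
    then show ?thesis by (metis abs_ge_zero power2_abs power_mono)
  qed
  moreover have "(sin \<theta>)\<^sup>2 \<le> 1" by (simp add: abs_square_le_1)
  ultimately have ba: "b \<le> a\<^sup>2" unfolding b_def
    by (metis mult_left_le mult.commute zero_le_power2 order_trans)
  have nsq: "(norm (xjt \<xi> j \<theta>))\<^sup>2 = a\<^sup>2 - b" unfolding a_def b_def by (rule norm_xjt_sq)
  have pos: "0 \<le> a - b / (2 * a)"
  proof -
    have "b / (2 * a) \<le> a\<^sup>2 / (2 * a)" using ba a by (intro divide_right_mono) auto
    also have "\<dots> \<le> a" using a by (simp add: power2_eq_square field_simps)
    finally show ?thesis by simp
  qed
  have "(a - b / (2 * a))\<^sup>2 = a\<^sup>2 - b + (b / (2 * a))\<^sup>2"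
    using a by (simp add: power2_eq_square field_simps)
  then have "(norm (xjt \<xi> j \<theta>))\<^sup>2 \<le> (a - b / (2 * a))\<^sup>2" unfolding nsq by simp
  then have "norm (xjt \<xi> j \<theta>) \<le> a - b / (2 * a)"
    using pos by (rule power2_le_imp_le)
  then show ?thesis by (simp add: a_def b_def)
qed

lemma A_diff:
  fixes F H :: "(real,'n::finite) vec \<Rightarrow> real" and \<xi> :: "(real,'n) vec"
  assumes F: "is_density F" and H: "is_density H" and ij: "i \<noteq> j"
    and bnd: "\<And>\<eta>. cmod (fourier F \<eta> - fourier H \<eta>) \<le> d * norm \<eta>"
  shows "cmod ((1/(2*pi)) * (LINT \<theta>|lborel. indicator {0..2*pi} \<theta> * fourier F (vij \<xi> i j \<theta>))
            - (1/(2*pi)) * (LINT \<theta>|lborel. indicator {0..2*pi} \<theta> * fourier H (vij \<xi> i j \<theta>))) \<le> d * norm \<xi>"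
proof -
  note iF = Q_fourier(3)[OF F ij, of \<xi>] and iH = Q_fourier(3)[OF H ij, of \<xi>]
  let ?D = "\<lambda>\<theta>. indicator {0..2*pi} \<theta> * fourier F (vij \<xi> i j \<theta>) - indicator {0..2*pi} \<theta> * fourier H (vij \<xi> i j \<theta>)"
  have "(1/(2*pi)) * (LINT \<theta>|lborel. indicator {0..2*pi} \<theta> * fourier F (vij \<xi> i j \<theta>))
            - (1/(2*pi)) * (LINT \<theta>|lborel. indicator {0..2*pi} \<theta> * fourier H (vij \<xi> i j \<theta>))
        = (1/(2*pi)) * (LINT \<theta>|lborel. ?D \<theta>)"
    using iF iH by (simp add: right_diff_distrib)
  moreover have "cmod (LINT \<theta>|lborel. ?D \<theta>) \<le> 2 * pi * (d * norm \<xi>)"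
  proof -
    have "cmod (LINT \<theta>|lborel. ?D \<theta>) \<le> (LINT \<theta>|lborel. cmod (?D \<theta>))"
      by (rule integral_norm_bound)
    also have "\<dots> \<le> (LINT \<theta>|lborel. indicator {0..2*pi} \<theta> * (d * norm \<xi>))"
    proof (rule integral_mono)
      show "integrable lborel (\<lambda>\<theta>. cmod (?D \<theta>))" using iF iH by auto
      show "integrable lborel (\<lambda>\<theta>. indicator {0..2*pi} \<theta> * (d * norm \<xi>))"
        using ind_integrable[of "\<lambda>_. d * norm \<xi>"] by simp
      fix \<theta> :: real
      have "cmod (?D \<theta>) = indicator {0..2*pi} \<theta> * cmod (fourier F (vij \<xi> i j \<theta>) - fourier H (vij \<xi> i j \<theta>))"
        by (simp add: indicator_def)
      also have "\<dots> \<le> indicator {0..2*pi} \<theta> * (d * norm \<xi>)"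
        using bnd[of "vij \<xi> i j \<theta>"] norm_vij[OF ij, of \<xi> \<theta>] by (intro mult_left_mono) auto
      finally show "cmod (?D \<theta>) \<le> indicator {0..2*pi} \<theta> * (d * norm \<xi>)" .
    qed
    also have "\<dots> = 2 * pi * (d * norm \<xi>)" by (rule ind_const_int)
    finally show ?thesis .
  qed
  ultimately show ?thesis by (simp add: norm_divide pos_divide_le_eq; simp add: mult_ac)
qed

lemma B_diff:
  fixes F H :: "(real,'n::finite) vec \<Rightarrow> real" and \<xi> :: "(real,'n) vec" and j :: 'n and g :: "real \<Rightarrow> real"
  assumes F: "is_density F" and H: "is_density H" and g: "is_density g" and \<xi>0: "\<xi> \<noteq> 0"
    and bnd: "\<And>\<eta>. cmod (fourier F \<eta> - fourier H \<eta>) \<le> d * norm \<eta>" and d0: "0 \<le> d"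
  defines "gh \<equiv> (\<lambda>\<theta>. LINT w|lborel. complex_of_real (g w) * cis (w * sin \<theta> * \<xi>$j))"
  shows "cmod ((1/(2*pi)) * (LINT \<theta>|lborel. indicator {0..2*pi} \<theta> * (gh \<theta> * fourier F (xjt \<xi> j \<theta>)))
            - (1/(2*pi)) * (LINT \<theta>|lborel. indicator {0..2*pi} \<theta> * (gh \<theta> * fourier H (xjt \<xi> j \<theta>))))
         \<le> d * (norm \<xi> - (\<xi>$j)\<^sup>2 / (4 * norm \<xi>))"
proof -
  note iF = R_fourier(3)[OF F g, of \<xi> j] and iH = R_fourier(3)[OF H g, of \<xi> j]
  let ?D = "\<lambda>\<theta>. indicator {0..2*pi} \<theta> * (gh \<theta> * fourier F (xjt \<xi> j \<theta>)) - indicator {0..2*pi} \<theta> * (gh \<theta> * fourier H (xjt \<xi> j \<theta>))"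
  let ?B = "\<lambda>\<theta>. indicator {0..2*pi} \<theta> * (d * norm \<xi>) - indicator {0..2*pi} \<theta> * (sin \<theta>)\<^sup>2 * (d * (\<xi>$j)\<^sup>2 / (2 * norm \<xi>))"
  have n0: "norm \<xi> > 0" using \<xi>0 by simp
  have "(1/(2*pi)) * (LINT \<theta>|lborel. indicator {0..2*pi} \<theta> * (gh \<theta> * fourier F (xjt \<xi> j \<theta>)))
            - (1/(2*pi)) * (LINT \<theta>|lborel. indicator {0..2*pi} \<theta> * (gh \<theta> * fourier H (xjt \<xi> j \<theta>)))
        = (1/(2*pi)) * (LINT \<theta>|lborel. ?D \<theta>)"
    using iF iH by (simp add: right_diff_distrib gh_def)
  moreover have "cmod (LINT \<theta>|lborel. ?D \<theta>) \<le> 2 * pi * (d * (norm \<xi> - (\<xi>$j)\<^sup>2 / (4 * norm \<xi>)))"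
  proof -
    have i1: "integrable lborel (\<lambda>\<theta>. indicator {0..2*pi} \<theta> * (d * norm \<xi>))"
      using ind_integrable[of "\<lambda>_. d * norm \<xi>"] by simp
    have cs2: "continuous_on {0..2*pi} (\<lambda>\<theta>::real. (sin \<theta>)\<^sup>2)" by (intro continuous_intros)
    have i3: "integrable lborel (\<lambda>\<theta>. indicator {0..2*pi} \<theta> * (sin \<theta>)\<^sup>2)"
      using ind_integrable[OF cs2] .
    have i2: "integrable lborel (\<lambda>\<theta>. indicator {0..2*pi} \<theta> * (sin \<theta>)\<^sup>2 * (d * (\<xi>$j)\<^sup>2 / (2 * norm \<xi>)))"
      using i3 by (rule integrable_mult_left)
    have "cmod (LINT \<theta>|lborel. ?D \<theta>) \<le> (LINT \<theta>|lborel. cmod (?D \<theta>))"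
      by (rule integral_norm_bound)
    also have "\<dots> \<le> (LINT \<theta>|lborel. ?B \<theta>)"
    proof (rule integral_mono)
      show "integrable lborel (\<lambda>\<theta>. cmod (?D \<theta>))" using iF iH by (auto simp: gh_def)
      show "integrable lborel ?B" using i1 i2 by auto
      fix \<theta> :: real
      have "cmod (?D \<theta>) = indicator {0..2*pi} \<theta> * (cmod (gh \<theta>) * cmod (fourier F (xjt \<xi> j \<theta>) - fourier H (xjt \<xi> j \<theta>)))"
        by (simp add: indicator_def right_diff_distrib[symmetric] norm_mult)
      also have "\<dots> \<le> indicator {0..2*pi} \<theta> * (1 * (d * (norm \<xi> - (\<xi>$j)\<^sup>2 * (sin \<theta>)\<^sup>2 / (2 * norm \<xi>))))"
      proof (intro mult_left_mono mult_mono)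
        show "cmod (gh \<theta>) \<le> 1" unfolding gh_def using gh_bound[OF g, of "sin \<theta> * \<xi>$j"] by (simp add: mult.assoc)
        show "cmod (fourier F (xjt \<xi> j \<theta>) - fourier H (xjt \<xi> j \<theta>)) \<le> d * (norm \<xi> - (\<xi>$j)\<^sup>2 * (sin \<theta>)\<^sup>2 / (2 * norm \<xi>))"
          using bnd[of "xjt \<xi> j \<theta>"] mult_left_mono[OF norm_xjt_le[OF \<xi>0, of j \<theta>] d0] by linarith
      qed auto
      also have "\<dots> = ?B \<theta>" using n0 by (simp add: indicator_def algebra_simps)
      finally show "cmod (?D \<theta>) \<le> ?B \<theta>" .
    qed
    also have "\<dots> = 2 * pi * (d * norm \<xi>) - pi * (d * (\<xi>$j)\<^sup>2 / (2 * norm \<xi>))"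
      using i1 i2 by (simp add: ind_const_int integral_mult_left_zero sin2_int)
    also have "\<dots> = 2 * pi * (d * (norm \<xi> - (\<xi>$j)\<^sup>2 / (4 * norm \<xi>)))"
      using n0 by (simp add: field_simps)
    finally show ?thesis .
  qed
  ultimately show ?thesis by (simp add: norm_divide pos_divide_le_eq; simp add: mult_ac)
qed

lemma card_pairs: "card {(i,j). (i::'n::{finite,linorder}) < j} = CARD('n) choose 2"
proof -
  let ?L = "{(i,j). (i::'n) < j}" and ?U = "{(i,j). (j::'n) < i}" and ?D = "{(i,j). (i::'n) = j}"
  have un: "(UNIV :: ('n \<times> 'n) set) = (?L \<union> ?U) \<union> ?D" by (auto simp: not_less_iff_gr_or_eq)
  have cU: "card ?U = card ?L"
    by (rule bij_betw_same_card[of "\<lambda>(i,j). (j,i)"]) (auto simp: bij_betw_def inj_on_def image_def)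
  have cD: "card ?D = CARD('n)"
    by (rule bij_betw_same_card[of "\<lambda>(i,j). i"]) (auto simp: bij_betw_def inj_on_def image_def)
  have "CARD('n) * CARD('n) = card (UNIV :: ('n \<times> 'n) set)"
    by (simp add: card_prod UNIV_Times_UNIV[symmetric] del: UNIV_Times_UNIV)
  also have "\<dots> = card (?L \<union> ?U) + card ?D"
    unfolding un by (rule card_Un_disjoint) auto
  also have "card (?L \<union> ?U) = card ?L + card ?U"
    by (rule card_Un_disjoint) auto
  finally have e: "CARD('n) * CARD('n) = 2 * card ?L + CARD('n)" using cU cD by simp
  have "2 * (CARD('n) choose 2) = CARD('n) * (CARD('n) - 1)"
    by (simp add: choose_two)
  also have "\<dots> = CARD('n) * CARD('n) - CARD('n)" by (simp add: diff_mult_distrib2)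
  finally show ?thesis using e by simp
qed

lemma Phi_fourier:
  fixes G :: "(real,'n::{finite,linorder}) vec \<Rightarrow> real" and g :: "real \<Rightarrow> real"
  assumes G: "is_density G" and g: "is_density g"
  shows "fourier (Phi lam mu g G) \<xi> =
     complex_of_real (lam/(lam+mu) / real (CARD('n) choose 2)) *
       (\<Sum>p\<in>{(i,j). i < j}. (1/(2*pi)) * (LINT \<theta>|lborel. indicator {0..2*pi} \<theta> * fourier G (vij \<xi> (fst p) (snd p) \<theta>)))
   + complex_of_real ((1 - lam/(lam+mu)) / real CARD('n)) *
       (\<Sum>j\<in>UNIV. (1/(2*pi)) * (LINT \<theta>|lborel. indicator {0..2*pi} \<theta> *
          ((LINT w|lborel. complex_of_real (g w) * cis (w * sin \<theta> * \<xi>$j)) * fourier G (xjt \<xi> j \<theta>))))"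
proof -
  define P where "P = {(i,j). (i::'n) < j}"
  define \<gamma> where "\<gamma> = lam/(lam+mu)"
  define C where "C = real (CARD('n) choose 2)"
  define N where "N = real CARD('n)"
  define q where "q = (\<lambda>(p::'n\<times>'n) v. (1/(2*pi)) * (LBINT \<theta>=0..2*pi. G (vij v (fst p) (snd p) \<theta>)))"
  have Pij: "\<And>p. p \<in> P \<Longrightarrow> fst p \<noteq> snd p" by (auto simp: P_def)
  have Q: "Qop G v = (1/C) * (\<Sum>p\<in>P. q p v)" for v
    unfolding Qop_def C_def P_def q_def by (simp add: case_prod_beta')
  have Phi: "Phi lam mu g G v = \<gamma> * ((1/C) * (\<Sum>p\<in>P. q p v)) + (1 - \<gamma>) * (1/N) * (\<Sum>j\<in>UNIV. Rop g G j v)" for v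
    unfolding Phi_def Let_def Q \<gamma>_def N_def ..
  have iq: "integrable lborel (\<lambda>v. complex_of_real (q p v) * cis (-(v \<bullet> \<xi>)))" if "p \<in> P" for p
    unfolding q_def using Q_fourier(1)[OF G Pij[OF that], of \<xi>] by simp
  have ir: "integrable lborel (\<lambda>v. complex_of_real (Rop g G j v) * cis (-(v \<bullet> \<xi>)))" for j
    using R_fourier(1)[OF G g] .
  have pt: "complex_of_real (Phi lam mu g G v) * cis (-(v \<bullet> \<xi>)) =
      complex_of_real (\<gamma> / C) * (\<Sum>p\<in>P. complex_of_real (q p v) * cis (-(v \<bullet> \<xi>)))
    + complex_of_real ((1 - \<gamma>) / N) * (\<Sum>j\<in>UNIV. complex_of_real (Rop g G j v) * cis (-(v \<bullet> \<xi>)))" for v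
    unfolding Phi by (simp add: sum_distrib_left sum_distrib_right algebra_simps)
  have "fourier (Phi lam mu g G) \<xi> =
      (LINT v|lborel. complex_of_real (\<gamma> / C) * (\<Sum>p\<in>P. complex_of_real (q p v) * cis (-(v \<bullet> \<xi>)))
    + complex_of_real ((1 - \<gamma>) / N) * (\<Sum>j\<in>UNIV. complex_of_real (Rop g G j v) * cis (-(v \<bullet> \<xi>))))"
    unfolding fourier_def pt ..
  also have "\<dots> = complex_of_real (\<gamma> / C) * (\<Sum>p\<in>P. LINT v|lborel. complex_of_real (q p v) * cis (-(v \<bullet> \<xi>)))
    + complex_of_real ((1 - \<gamma>) / N) * (\<Sum>j\<in>UNIV. LINT v|lborel. complex_of_real (Rop g G j v) * cis (-(v \<bullet> \<xi>)))"
    using iq ir by (simp add: integral_sum)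
  also have "(\<Sum>p\<in>P. LINT v|lborel. complex_of_real (q p v) * cis (-(v \<bullet> \<xi>)))
      = (\<Sum>p\<in>P. (1/(2*pi)) * (LINT \<theta>|lborel. indicator {0..2*pi} \<theta> * fourier G (vij \<xi> (fst p) (snd p) \<theta>)))"
  proof (rule sum.cong[OF refl])
    fix p assume p: "p \<in> P"
    show "(LINT v|lborel. complex_of_real (q p v) * cis (-(v \<bullet> \<xi>))) = (1/(2*pi)) * (LINT \<theta>|lborel. indicator {0..2*pi} \<theta> * fourier G (vij \<xi> (fst p) (snd p) \<theta>))"
      unfolding q_def prod.case_eq_if using Q_fourier(2)[OF G Pij[OF p], of \<xi>] by simp
  qed
  also have "(\<Sum>j\<in>UNIV. LINT v|lborel. complex_of_real (Rop g G j v) * cis (-(v \<bullet> \<xi>)))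
      = (\<Sum>j\<in>UNIV. (1/(2*pi)) * (LINT \<theta>|lborel. indicator {0..2*pi} \<theta> *
          ((LINT w|lborel. complex_of_real (g w) * cis (w * sin \<theta> * \<xi>$j)) * fourier G (xjt \<xi> j \<theta>))))"
    by (rule sum.cong[OF refl]) (rule R_fourier(2)[OF G g])
  finally show ?thesis unfolding P_def \<gamma>_def C_def N_def .
qed

lemma cmod_ofreal_mult: "0 \<le> r \<Longrightarrow> cmod (complex_of_real r * z) = r * cmod z"
  by (simp only: norm_mult norm_of_real abs_of_nonneg)

lemma fourier_zero:
  assumes "is_density G" shows "fourier G 0 = 1"
  using assms unfolding fourier_def is_density_def by simp

lemma sum_sq_comp: "(\<Sum>j\<in>UNIV. (\<xi>$j)\<^sup>2) = (norm (\<xi>::(real,'n::finite) vec))\<^sup>2"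
proof -
  have "(norm \<xi>)\<^sup>2 = \<xi> \<bullet> \<xi>" by (rule power2_norm_eq_inner)
  also have "\<dots> = (\<Sum>j\<in>UNIV. (\<xi>$j)\<^sup>2)" by (simp add: inner_vec_def power2_eq_square)
  finally show ?thesis by simp
qed

theorem lemma5:
  fixes F H :: "(real, 'n::{finite,linorder}) vec \<Rightarrow> real" and g :: "real \<Rightarrow> real"
    and lam mu :: real
  assumes "CARD('n) \<ge> 2" and "lam > 0" and "mu > 0"
    and "is_density g" and "integrable lborel (\<lambda>x. (g x)^2)"
    and "integrable lborel (\<lambda>x. x * g x)" and "(LINT x|lborel. x * g x) = 0"
    and "integrable lborel (\<lambda>x. x^2 * g x)"
    and "is_density F" and "is_density H"
    and "integrable lborel (\<lambda>v. norm v * F v)"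
    and "integrable lborel (\<lambda>v. norm v * H v)"
  shows "dT1 (Phi lam mu g F) (Phi lam mu g H)
           \<le> ereal (1 - (1 - lam / (lam + mu)) / (4 * real CARD('n))) * dT1 F H"
proof -
  note g = assms(4) and F = assms(9) and H = assms(10)
  define \<gamma> where "\<gamma> = lam / (lam + mu)"
  have \<gamma>0: "0 < \<gamma>" and \<gamma>1: "\<gamma> < 1" using assms(2,3) by (auto simp: \<gamma>_def field_simps)
  define N where "N = real CARD('n)"
  have N2: "N \<ge> 2" using assms(1) by (simp add: N_def)
  define C where "C = real (CARD('n) choose 2)"
  have CP: "real (card {(i,j). (i::'n) < j}) = C" by (simp add: C_def card_pairs)
  have C0: "C > 0" using assms(1) by (simp add: C_def)
  define cc where "cc = 1 - (1 - \<gamma>) / (4 * N)"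
  have cc0: "cc > 0" using \<gamma>0 \<gamma>1 N2 by (simp add: cc_def field_simps)
  obtain k :: 'n where True by simp
  have ax0: "axis k (1::real) \<noteq> 0" by (simp add: axis_eq_0_iff)
  have D0: "0 \<le> dT1 F H"
    unfolding dT1_def
    by (rule order_trans[OF _ SUP_upper[of "axis k 1"]]) (use ax0 in auto)
  show ?thesis
  proof (cases "dT1 F H")
    case PInf
    then show ?thesis using cc0 by (simp add: cc_def \<gamma>_def N_def)
  next
    case MInf then show ?thesis using D0 by simp
  next
    case (real d)
    have d0: "0 \<le> d" using D0 real by simp
    have bnd: "cmod (fourier F \<eta> - fourier H \<eta>) \<le> d * norm \<eta>" for \<eta>
    proof (cases "\<eta> = 0")
      case True then show ?thesis using fourier_zero[OF F] fourier_zero[OF H] by simp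
    next
      case False
      have "ereal (cmod (fourier F \<eta> - fourier H \<eta>) / norm \<eta>) \<le> dT1 F H"
        unfolding dT1_def by (rule SUP_upper) (use False in auto)
      then have "cmod (fourier F \<eta> - fourier H \<eta>) / norm \<eta> \<le> d" using real by simp
      then show ?thesis using False by (simp add: divide_le_eq mult.commute)
    qed
    have main: "cmod (fourier (Phi lam mu g F) \<xi> - fourier (Phi lam mu g H) \<xi>) \<le> cc * d * norm \<xi>"
      if \<xi>0: "\<xi> \<noteq> 0" for \<xi> :: "(real,'n) vec"
    proof -
      define P where "P = {(i,j). (i::'n) < j}"
      define A where "A = (\<lambda>G p. (1/(2*pi)) * (LINT \<theta>|lborel. indicator {0..2*pi} \<theta> * fourier G (vij \<xi> (fst p) (snd p) \<theta>)) :: complex)"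
      define B where "B = (\<lambda>G j. (1/(2*pi)) * (LINT \<theta>|lborel. indicator {0..2*pi} \<theta> *
          ((LINT w|lborel. complex_of_real (g w) * cis (w * sin \<theta> * \<xi>$j)) * fourier G (xjt \<xi> j \<theta>))) :: complex)"
      have dec: "fourier (Phi lam mu g G) \<xi> = complex_of_real (\<gamma> / C) * (\<Sum>p\<in>P. A G p) + complex_of_real ((1 - \<gamma>) / N) * (\<Sum>j\<in>UNIV. B G j)"
        if "is_density G" for G
        unfolding A_def B_def P_def \<gamma>_def C_def N_def by (rule Phi_fourier[OF that g])
      have nA: "cmod (A F p - A H p) \<le> d * norm \<xi>" if "p \<in> P" for p
        unfolding A_def by (rule A_diff[OF F H _ bnd]) (use that in \<open>auto simp: P_def\<close>)
      have nB: "cmod (B F j - B H j) \<le> d * (norm \<xi> - (\<xi>$j)\<^sup>2 / (4 * norm \<xi>))" for j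
        unfolding B_def by (rule B_diff[OF F H g \<xi>0 bnd d0])
      have "fourier (Phi lam mu g F) \<xi> - fourier (Phi lam mu g H) \<xi>
         = complex_of_real (\<gamma> / C) * (\<Sum>p\<in>P. A F p - A H p) + complex_of_real ((1 - \<gamma>) / N) * (\<Sum>j\<in>UNIV. B F j - B H j)"
        unfolding dec[OF F] dec[OF H] by (simp add: sum_subtractf algebra_simps)
      also have "cmod \<dots> \<le> (\<gamma> / C) * (\<Sum>p\<in>P. cmod (A F p - A H p)) + ((1 - \<gamma>) / N) * (\<Sum>j\<in>UNIV. cmod (B F j - B H j))"
      proof -
        have "cmod (complex_of_real (\<gamma> / C) * (\<Sum>p\<in>P. A F p - A H p)) = (\<gamma> / C) * cmod (\<Sum>p\<in>P. A F p - A H p)"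
          by (rule cmod_ofreal_mult) (use \<gamma>0 C0 in simp)
        also have "\<dots> \<le> (\<gamma> / C) * (\<Sum>p\<in>P. cmod (A F p - A H p))"
          by (rule mult_left_mono[OF norm_sum]) (use \<gamma>0 C0 in simp)
        finally have 1: "cmod (complex_of_real (\<gamma> / C) * (\<Sum>p\<in>P. A F p - A H p)) \<le> (\<gamma> / C) * (\<Sum>p\<in>P. cmod (A F p - A H p))" .
        have "cmod (complex_of_real ((1 - \<gamma>) / N) * (\<Sum>j\<in>UNIV. B F j - B H j)) = ((1 - \<gamma>) / N) * cmod (\<Sum>j\<in>UNIV. B F j - B H j)"
          by (rule cmod_ofreal_mult) (use \<gamma>1 N2 in simp)
        also have "\<dots> \<le> ((1 - \<gamma>) / N) * (\<Sum>j\<in>UNIV. cmod (B F j - B H j))"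
          by (rule mult_left_mono[OF norm_sum]) (use \<gamma>1 N2 in simp)
        finally have 2: "cmod (complex_of_real ((1 - \<gamma>) / N) * (\<Sum>j\<in>UNIV. B F j - B H j)) \<le> ((1 - \<gamma>) / N) * (\<Sum>j\<in>UNIV. cmod (B F j - B H j))" .
        from 1 2
        show ?thesis by (meson norm_triangle_le add_mono)
      qed
      also have "\<dots> \<le> (\<gamma> / C) * (\<Sum>p\<in>P. d * norm \<xi>) + ((1 - \<gamma>) / N) * (\<Sum>j\<in>UNIV. d * (norm \<xi> - (\<xi>$j)\<^sup>2 / (4 * norm \<xi>)))"
        using \<gamma>0 \<gamma>1 C0 N2 nA nB by (intro add_mono mult_left_mono sum_mono) auto
      also have "(\<Sum>p\<in>P. d * norm \<xi>) = C * (d * norm \<xi>)" using CP by (simp add: P_def)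
      also have "(\<Sum>j\<in>UNIV. d * (norm \<xi> - (\<xi>$j)\<^sup>2 / (4 * norm \<xi>))) = d * (N * norm \<xi> - (norm \<xi>)\<^sup>2 / (4 * norm \<xi>))"
        by (simp add: sum_distrib_left[symmetric] sum_subtractf sum_divide_distrib[symmetric] sum_sq_comp N_def)
      also have "(\<gamma> / C) * (C * (d * norm \<xi>)) + ((1 - \<gamma>) / N) * (d * (N * norm \<xi> - (norm \<xi>)\<^sup>2 / (4 * norm \<xi>))) = cc * d * norm \<xi>"
        using C0 N2 \<xi>0 by (simp add: cc_def field_simps power2_eq_square)
      finally show ?thesis .
    qed
    have "dT1 (Phi lam mu g F) (Phi lam mu g H) \<le> ereal (cc * d)"
      unfolding dT1_def
    proof (rule SUP_least)
      fix \<xi> :: "(real,'n) vec" assume "\<xi> \<in> UNIV - {0}"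
      then have \<xi>0: "\<xi> \<noteq> 0" by simp
      have "cmod (fourier (Phi lam mu g F) \<xi> - fourier (Phi lam mu g H) \<xi>) / norm \<xi> \<le> cc * d"
        using main[OF \<xi>0] \<xi>0 by (simp add: divide_le_eq)
      then show "ereal (cmod (fourier (Phi lam mu g F) \<xi> - fourier (Phi lam mu g H) \<xi>) / norm \<xi>) \<le> ereal (cc * d)"
        by simp
    qed
    then show ?thesis using real by (simp add: cc_def \<gamma>_def N_def)
  qed
qed

end
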